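(* Let $\kappa$ be inaccessible, $\kappa\le\lambda$, let $C$ be a club subset of $P_\kappa\lambda$ (in Jech's sense), and let $f:P_\kappa\lambda\to P_\kappa\lambda$ satisfy $z\subsetneq f(z)\in C$ for every $z\in P_\kappa\lambda$. Then $C_f=\{x\in P_\kappa\lambda: x\cap\kappa\neq\emptyset,\ f[P_{\kappa_x}x]\subseteq P_{\kappa_x}x\}\subseteq C$. In particular every club subset of $P_\kappa\lambda$ belongs to $\mathrm{NSS}^*_{\kappa,\lambda}$.
   Context: $P_\kappa\lambda=\{x\subseteq\lambda:|x|<\kappa\}$, $\kappa_x=|x\cap\kappa|$, $P_\mu x=\{y\subseteq x:|y|<\mu\}$. A Jech club is a subset of $P_\kappa\lambda$ which is unbounded under $\subseteq$ and closed under unions of $\subseteq$-directed subsets of size $<\kappa$. $\mathrm{NSS}^*_{\kappa,\lambda}$ is the filter of sets containing some $C_g$, $g:P_\kappa\lambda\to P_\kappa\lambda$, where $C_g$ is defined as $C_f$ in the claim. *)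

theory Defs
  imports Main
begin

unbundle cardinal_syntax

(* Cardinals: card_of A = |A| (HOL's BNF cardinal library), <o = strict cardinal order.
   lambda is modelled as the universe of the type 'a, kappa as a subset K of it. *)

definition inaccessible :: "'a set \<Rightarrow> bool" where
  "inaccessible K \<longleftrightarrow>
     natLeq <o (card_of K) \<and> regularCard (card_of K) \<and>
     (\<forall>A :: 'a set. (card_of A) <o (card_of K) \<longrightarrow> card_of (Pow A) <o (card_of K))"

definition Pkl :: "'a set \<Rightarrow> 'a set set" where
  "Pkl K = {x. (card_of x) <o (card_of K)}"

(* P_mu x with mu given as the cardinality of a set M *)
definition Pmu :: "'a set \<Rightarrow> 'a set \<Rightarrow> 'a set set" where
  "Pmu M x = {y. y \<subseteq> x \<and> (card_of y) <o (card_of M)}"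

definition directed_subset :: "'a set set \<Rightarrow> bool" where
  "directed_subset D \<longleftrightarrow> D \<noteq> {} \<and> (\<forall>a\<in>D. \<forall>b\<in>D. \<exists>c\<in>D. a \<subseteq> c \<and> b \<subseteq> c)"

definition jech_club :: "'a set \<Rightarrow> 'a set set \<Rightarrow> bool" where
  "jech_club K C \<longleftrightarrow>
     C \<subseteq> Pkl K \<and>
     (\<forall>x\<in>Pkl K. \<exists>y\<in>C. x \<subseteq> y) \<and>
     (\<forall>D. D \<subseteq> C \<and> directed_subset D \<and> (card_of D) <o (card_of K) \<longrightarrow> \<Union>D \<in> C)"

(* C_f = {x in P_kappa lambda : x \<inter> kappa \<noteq> {}, f[P_{kappa_x} x] \<subseteq> P_{kappa_x} x},
   kappa_x = |x \<inter> K| *)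
definition Cf :: "'a set \<Rightarrow> ('a set \<Rightarrow> 'a set) \<Rightarrow> 'a set set" where
  "Cf K f = {x \<in> Pkl K. x \<inter> K \<noteq> {} \<and> f ` Pmu (x \<inter> K) x \<subseteq> Pmu (x \<inter> K) x}"

definition NSS_star :: "'a set \<Rightarrow> 'a set set set" where
  "NSS_star K = {A. A \<subseteq> Pkl K \<and> (\<exists>g. g ` Pkl K \<subseteq> Pkl K \<and> Cf K g \<subseteq> A)}"

end

theory Submission
  imports Defs
begin

lemma fin_less_inf:
  assumes "finite A" and "\<not>finite B"
  shows "|A| <o |B|"
  by (meson assms card_of_Well_order card_of_ordLeq_finite not_ordLeq_iff_ordLess)

lemma main:
  fixes K :: "'a set" and C :: "'a set set" and f :: "'a set \<Rightarrow> 'a set"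
  assumes inac: "inaccessible K"
    and club: "jech_club K C"
    and fz: "\<forall>z\<in>Pkl K. z \<subset> f z \<and> f z \<in> C"
  shows "Cf K f \<subseteq> C"
proof
  fix x assume "x \<in> Cf K f"
  then have xP: "|x| <o |K|" and Mne: "x \<inter> K \<noteq> {}"
    and fD: "f ` Pmu (x \<inter> K) x \<subseteq> Pmu (x \<inter> K) x"
    unfolding Cf_def Pkl_def by auto
  define M where "M = x \<inter> K"
  define D where "D = Pmu M x"
  have fD': "\<And>z. z \<in> D \<Longrightarrow> f z \<in> D" using fD unfolding D_def M_def by auto
  have DP: "z \<in> Pkl K" if "z \<in> D" for z
  proof -
    have "z \<subseteq> x" using that unfolding D_def Pmu_def by auto
    then have "|z| \<le>o |x|" by (rule card_of_mono1)
    then show ?thesis using xP unfolding Pkl_def using ordLeq_ordLess_trans by blast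
  qed
  have Minf: "\<not> finite M"
  proof
    assume fM: "finite M"
    obtain a where aM: "a \<in> M" using Mne M_def by auto
    define z where "z = M - {a}"
    have fz0: "finite z" using fM z_def by auto
    have cz: "card z < card M" proof -
      have "card M > 0" using fM aM card_gt_0_iff by blast
      then show ?thesis using fM aM z_def card_Diff_singleton by simp
    qed
    have "|z| <o |M|"
    proof -
      have "\<not>(\<exists>g. inj_on g M \<and> g ` M \<subseteq> z)"
      proof
        assume "\<exists>g. inj_on g M \<and> g ` M \<subseteq> z"
        then obtain g where "inj_on g M" "g ` M \<subseteq> z" by blast
        then have "card M \<le> card z" using card_inj_on_le[OF _ _ fz0] by blast
        then show False using cz by simp
      qed
      then show ?thesis using card_of_ordLess by blast
    qed
    then have zD: "z \<in> D" unfolding D_def Pmu_def z_def M_def by auto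
    have "f z \<in> D" using fD' zD .
    then have fzx: "|f z| <o |M|" unfolding D_def Pmu_def by auto
    then have ffin: "finite (f z)" using fM card_of_ordLeq_finite ordLess_imp_ordLeq by blast
    have "z \<subset> f z" using fz DP[OF zD] by auto
    then have "card z < card (f z)" using ffin psubset_card_mono by blast
    then have "card M \<le> card (f z)" using cz fM aM z_def by auto
    then obtain g where "g ` M \<subseteq> f z" "inj_on g M" using card_le_inj[OF fM ffin] by blast
    then have "|M| \<le>o |f z|" using card_of_ordLeq by blast
    then show False using fzx not_ordLess_ordLeq by blast
  qed
  define E where "E = f ` D"
  have ED: "E \<subseteq> D" using fD' E_def by auto
  have EC: "E \<subseteq> C" using fz DP E_def by auto
  have single: "{t} \<in> D" if "t \<in> x" for t
    using that fin_less_inf[OF _ Minf, of "{t}"] unfolding D_def Pmu_def by auto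
  have dir: "directed_subset E"
    unfolding directed_subset_def
  proof (intro conjI ballI)
    obtain t where "t \<in> x" using Mne by auto
    then show "E \<noteq> {}" using single E_def by auto
  next
    fix a b assume a: "a \<in> E" and b: "b \<in> E"
    then have "a \<in> D" "b \<in> D" using ED by auto
    then have "a \<union> b \<in> D" unfolding D_def Pmu_def
      using card_of_Un_ordLess_infinite[OF Minf] by auto
    then have "a \<union> b \<subseteq> f (a \<union> b)" "f (a \<union> b) \<in> E"
      using fz DP[of "a \<union> b"] E_def by auto
    then show "\<exists>c\<in>E. a \<subseteq> c \<and> b \<subseteq> c" by blast
  qed
  have Ecard: "|E| <o |K|"
  proof -
    have "|E| \<le>o |D|" unfolding E_def by (rule card_of_image)
    moreover have "|D| \<le>o |Pow x|" by (rule card_of_mono1) (auto simp: D_def Pmu_def)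
    moreover have "|Pow x| <o |K|" using inac xP unfolding inaccessible_def by blast
    ultimately show ?thesis using ordLeq_ordLess_trans ordLeq_transitive by blast
  qed
  have "\<Union>E = x"
  proof
    show "\<Union>E \<subseteq> x" using ED unfolding D_def Pmu_def by auto
  next
    show "x \<subseteq> \<Union>E"
    proof
      fix t assume "t \<in> x"
      then have "{t} \<in> D" by (rule single)
      then have "{t} \<subseteq> f {t}" "f {t} \<in> E" using fz DP E_def by auto
      then show "t \<in> \<Union>E" by auto
    qed
  qed
  then show "x \<in> C" using club EC dir Ecard unfolding jech_club_def by metis
qed

theorem lemma2p4:
  fixes K :: "'a set" and C :: "'a set set" and f :: "'a set \<Rightarrow> 'a set"
  assumes "inaccessible K"
    and "jech_club K C"
    and "\<forall>z\<in>Pkl K. z \<subset> f z \<and> f z \<in> C"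
  shows "Cf K f \<subseteq> C \<and> (\<forall>D. jech_club K D \<longrightarrow> D \<in> NSS_star K)"
proof (intro conjI allI impI)
  show "Cf K f \<subseteq> C" using main assms by blast
next
  fix D assume cD: "jech_club K D"
  have Kinf: "\<not> finite K"
    using assms(1) unfolding inaccessible_def
    using infinite_iff_natLeq_ordLeq ordLess_imp_ordLeq by blast
  have ex: "\<exists>y. y \<in> D \<and> z \<subset> y" if zP: "z \<in> Pkl K" for z
  proof -
    have zl: "|z| <o |K|" using zP unfolding Pkl_def by auto
    have "z \<noteq> UNIV"
    proof
      assume "z = UNIV"
      then have "|K| \<le>o |z|" by (simp add: card_of_mono1)
      then show False using zl not_ordLess_ordLeq by blast
    qed
    then obtain a where a: "a \<notin> z" by auto
    have u: "|{a} \<union> z| <o |K|"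
      by (rule card_of_Un_ordLess_infinite[OF Kinf fin_less_inf[OF _ Kinf] zl]) simp
    have "{a} \<union> z = insert a z" by auto
    then have "|insert a z| <o |K|" using u by simp
    then have "insert a z \<in> Pkl K" unfolding Pkl_def by simp
    then obtain y where "y \<in> D" "insert a z \<subseteq> y" using cD unfolding jech_club_def by blast
    then show ?thesis using a by blast
  qed
  define g where "g z = (SOME y. y \<in> D \<and> z \<subset> y)" for z
  have g: "\<forall>z\<in>Pkl K. z \<subset> g z \<and> g z \<in> D"
    using ex unfolding g_def by (metis (no_types, lifting) someI_ex)
  have DP: "D \<subseteq> Pkl K" using cD unfolding jech_club_def by auto
  have "Cf K g \<subseteq> D" using main[OF assms(1) cD g] .
  moreover have "g ` Pkl K \<subseteq> Pkl K" using g DP by auto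
  ultimately show "D \<in> NSS_star K" unfolding NSS_star_def using DP by blast
qed

end
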